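(* Consider the FlexPD-C iterates described in the context with $\beta>0$, integer $T\ge1$ and $0<\alpha<1/\rho(B)$, and let $C=\sum_{t=0}^{T-1}(I-\alpha B)^t$, $M=C^{-1}(I-\alpha B)^T$, $N=\frac{1}{\alpha}(C^{-1}-M)$. Then for every $k\ge0$, \[\alpha\big(\nabla f(x^k)-\nabla f(x^* )\big)=M(x^k-x^{k+1})+\alpha(\beta A'A-N)(x^{k+1}-x^* )-\alpha A'(\lambda^{k+1}-\lambda^* ).\]
   Context: Setting: $n$ agents are connected by a connected undirected graph with edge set $\mathcal E$, $\epsilon=|\mathcal E|$. For $x\in\mathbb R^n$ let $f(x)=\sum_{i=1}^n f_i(x_i)$, where each $f_i:\mathbb R\to\mathbb R$ is twice differentiable with $m\le f_i''\le L$ for constants $0<m\le L$; $\nabla f(x)=(f_1'(x_1),\dots,f_n'(x_n))'$. $A\in\mathbb R^{\epsilon\times n}$ is the edge–node incidence matrix (null space spanned by the all-ones vector). $B\in\mathbb R^{n\times n}$ is symmetric positive semidefinite with the same null space as $A$, off-diagonal entries nonzero only on edges; $\rho(B)$ is its largest eigenvalue. $x^*$ is the unique minimizer of $f$ subject to $Ax=0$ and $\lambda^*$ a Lagrange multiplier with $\nabla f(x^* )+A'\lambda^*=0$, $Ax^*=0$, $Bx^*=0$, chosen in the column space of $A$. FlexPD-C: given $\alpha,\beta>0$, $T\ge1$, $x^0$ arbitrary, $\lambda^0=0$; for $k\ge0$: $x^{k+1,0}=x^k$; for $t=1,\dots,T$, $x^{k+1,t}=x^{k+1,t-1}-\alpha\nabla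 f(x^k)-\alpha A'\lambda^k-\alpha Bx^{k+1,t-1}$; then $x^{k+1}=x^{k+1,T}$, $\lambda^{k+1}=\lambda^k+\beta Ax^{k+1}$. *)

theory Defs
  imports "HOL-Analysis.Analysis"
begin

text \<open>Graph: nodes of finite type 'n, edges of finite type 'e; each edge e has two distinct
 endpoints src e, dst e (an arbitrary orientation, used only for the incidence matrix).\<close>

definition simple_graph :: "('e \<Rightarrow> 'n) \<Rightarrow> ('e \<Rightarrow> 'n) \<Rightarrow> bool" where
  "simple_graph src dst \<longleftrightarrow> (\<forall>e. src e \<noteq> dst e) \<and>
     (\<forall>e e'. {src e, dst e} = {src e', dst e'} \<longrightarrow> e = e')"

definition adjacent :: "('e \<Rightarrow> 'n) \<Rightarrow> ('e \<Rightarrow> 'n) \<Rightarrow> 'n \<Rightarrow> 'n \<Rightarrow> bool" where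
  "adjacent src dst i j \<longleftrightarrow> (\<exists>e. {src e, dst e} = {i, j})"

definition graph_connected :: "('e \<Rightarrow> 'n) \<Rightarrow> ('e \<Rightarrow> 'n) \<Rightarrow> bool" where
  "graph_connected src dst \<longleftrightarrow> (\<forall>i j. (adjacent src dst)\<^sup>*\<^sup>* i j)"

definition incidence :: "('e::finite \<Rightarrow> 'n::finite) \<Rightarrow> ('e \<Rightarrow> 'n) \<Rightarrow> real^'n^'e" where
  "incidence src dst = (\<chi> e i. if i = src e then 1 else if i = dst e then -1 else 0)"

definition rho :: "real^'n::finite^'n \<Rightarrow> real" where
  "rho B = Max {\<mu>. \<exists>v. v \<noteq> 0 \<and> B *v v = \<mu> *\<^sub>R v}"

primrec matpow :: "real^'n::finite^'n \<Rightarrow> nat \<Rightarrow> real^'n^'n" where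
  "matpow M 0 = mat 1"
| "matpow M (Suc t) = M ** matpow M t"

definition fobj :: "('n::finite \<Rightarrow> real \<Rightarrow> real) \<Rightarrow> real^'n \<Rightarrow> real" where
  "fobj fs x = (\<Sum>i\<in>UNIV. fs i (x $ i))"

definition fgrad :: "('n::finite \<Rightarrow> real \<Rightarrow> real) \<Rightarrow> real^'n \<Rightarrow> real^'n" where
  "fgrad fs x = (\<chi> i. deriv (fs i) (x $ i))"

definition inner_loop ::
  "real \<Rightarrow> real^'n::finite^'e::finite \<Rightarrow> real^'n^'n \<Rightarrow> real^'n \<Rightarrow> real^'e \<Rightarrow> nat \<Rightarrow> real^'n \<Rightarrow> real^'n" where
  "inner_loop \<alpha> A B g l T z0 =
     ((\<lambda>z. z - \<alpha> *\<^sub>R g - \<alpha> *\<^sub>R (transpose A *v l) - \<alpha> *\<^sub>R (B *v z)) ^^ T) z0"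

primrec flexpd ::
  "('n::finite \<Rightarrow> real \<Rightarrow> real) \<Rightarrow> real^'n^'e::finite \<Rightarrow> real^'n^'n \<Rightarrow> real \<Rightarrow> real \<Rightarrow> nat \<Rightarrow> real^'n
   \<Rightarrow> nat \<Rightarrow> (real^'n) \<times> (real^'e)" where
  "flexpd fs A B \<alpha> \<beta> T x0 0 = (x0, 0)"
| "flexpd fs A B \<alpha> \<beta> T x0 (Suc k) =
     (let (x, l) = flexpd fs A B \<alpha> \<beta> T x0 k;
          x' = inner_loop \<alpha> A B (fgrad fs x) l T x
      in (x', l + \<beta> *\<^sub>R (A *v x')))"

end

theory Submission
  imports Defs
begin

lemma smv: "(k *\<^sub>R M) *v (v::real^'n::finite) = k *\<^sub>R (M *v v)" for M :: "real^'n^'m::finite"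
  by (simp add: scaleR_matrix_vector_assoc)

lemma mv_sum: "finite S \<Longrightarrow> (\<Sum>s\<in>S. F s) *v (y::real^'n::finite) = (\<Sum>s\<in>S. F s *v y)"
  for F :: "'a \<Rightarrow> real^'n^'m::finite"
  by (induction S rule: finite_induct) (auto simp: matrix_vector_mult_add_rdistrib)

lemma mv_sum_r: "(W::real^'n::finite^'m::finite) *v (\<Sum>s\<in>S. F s) = (\<Sum>s\<in>S. W *v F s)"
proof (cases "finite S")
  case True then show ?thesis
    by (induction S rule: finite_induct) (auto simp: matrix_vector_right_distrib)
qed simp

lemma matpow_add: "matpow W (a+b) = matpow W a ** matpow W b"
  by (induction a) (auto simp: matrix_mul_assoc)

lemma matpow_comm: "matpow W t ** W = W ** matpow W t"
  by (induction t) (auto simp: matrix_mul_assoc[symmetric])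

lemma sym_inner: "transpose W = W \<Longrightarrow> ((W::real^'n::finite^'n) *v x) \<bullet> w = x \<bullet> (W *v w)"
  by (metis dot_lmul_matrix vector_transpose_matrix)

lemma matpow_sym: "transpose W = W \<Longrightarrow> (matpow W t *v u) \<bullet> w = u \<bullet> (matpow W t *v (w::real^'n::finite))"
proof (induction t arbitrary: w)
  case (Suc t)
  have "(matpow W (Suc t) *v u) \<bullet> w = (W *v (matpow W t *v u)) \<bullet> w"
    by (simp add: matrix_vector_mul_assoc)
  also have "\<dots> = (matpow W t *v u) \<bullet> (W *v w)" using sym_inner[OF Suc.prems] by blast
  also have "\<dots> = u \<bullet> (matpow W t *v (W *v w))" using Suc by blast
  also have "\<dots> = u \<bullet> (matpow W (Suc t) *v w)"
    by (simp add: matrix_vector_mul_assoc matpow_comm)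
  finally show ?case .
qed simp

lemma inner_loop_formula:
  "inner_loop \<alpha> A B g l t z =
     matpow (mat 1 - \<alpha> *\<^sub>R B) t *v z
     - \<alpha> *\<^sub>R (\<Sum>s<t. matpow (mat 1 - \<alpha> *\<^sub>R B) s *v (g + transpose A *v l))"
proof (induction t)
  case 0
  then show ?case by (simp add: inner_loop_def)
next
  case (Suc t)
  define W where "W = mat 1 - \<alpha> *\<^sub>R B"
  define y where "y = g + transpose A *v l"
  have Wu: "W *v u = u - \<alpha> *\<^sub>R (B *v u)" for u
    by (simp add: W_def matrix_vector_mult_diff_rdistrib smv)
  have "inner_loop \<alpha> A B g l (Suc t) z =
     (\<lambda>z. z - \<alpha> *\<^sub>R g - \<alpha> *\<^sub>R (transpose A *v l) - \<alpha> *\<^sub>R (B *v z)) (inner_loop \<alpha> A B g l t z)"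
    by (simp add: inner_loop_def)
  also have "\<dots> = W *v (inner_loop \<alpha> A B g l t z) - \<alpha> *\<^sub>R y"
    by (simp add: Wu y_def algebra_simps)
  also have "\<dots> = W *v (matpow W t *v z) - \<alpha> *\<^sub>R (\<Sum>s<t. W *v (matpow W s *v y)) - \<alpha> *\<^sub>R y"
    by (simp add: Suc W_def y_def matrix_vector_mult_diff_distrib matrix_vector_mult_scaleR mv_sum_r)
  also have "\<dots> = matpow W (Suc t) *v z - \<alpha> *\<^sub>R (\<Sum>s<Suc t. matpow W s *v y)"
  proof -
    have "(\<Sum>s<Suc t. matpow W s *v y) = y + (\<Sum>s<t. W *v (matpow W s *v y))"
      by (subst sum.lessThan_Suc_shift) (simp add: matrix_vector_mul_assoc)
    then show ?thesis by (simp add: matrix_vector_mul_assoc algebra_simps)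
  qed
  finally show ?case by (simp add: W_def y_def)
qed

lemma eig_finite:
  fixes B :: "real^'n::finite^'n"
  assumes sym: "transpose B = B"
  shows "finite {\<mu>. \<exists>v. v \<noteq> 0 \<and> B *v v = \<mu> *\<^sub>R v}"
proof -
  define S where "S = {\<mu>. \<exists>v. v \<noteq> 0 \<and> B *v v = \<mu> *\<^sub>R v}"
  define ev where "ev \<mu> = (SOME v. v \<noteq> 0 \<and> B *v v = \<mu> *\<^sub>R v)" for \<mu>
  have ev: "ev \<mu> \<noteq> 0 \<and> B *v ev \<mu> = \<mu> *\<^sub>R ev \<mu>" if "\<mu> \<in> S" for \<mu>
    using that unfolding S_def ev_def by (metis (mono_tags, lifting) mem_Collect_eq someI)
  have inj: "inj_on ev S"
  proof (rule inj_onI)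
    fix a b assume "a \<in> S" "b \<in> S" "ev a = ev b"
    then have "a *\<^sub>R ev a = b *\<^sub>R ev a" "ev a \<noteq> 0" using ev by metis+
    then show "a = b" by (metis scaleR_cancel_right)
  qed
  have "pairwise orthogonal (ev ` S)"
  proof (clarsimp simp: pairwise_def)
    fix a b assume ab: "a \<in> S" "b \<in> S" "ev a \<noteq> ev b"
    then have "a \<noteq> b" by auto
    have "a * (ev a \<bullet> ev b) = (B *v ev a) \<bullet> ev b" using ev[OF ab(1)] by simp
    also have "\<dots> = ev a \<bullet> (B *v ev b)" using sym_inner[OF sym] by blast
    also have "\<dots> = b * (ev a \<bullet> ev b)" using ev[OF ab(2)] by simp
    finally have "ev a \<bullet> ev b = 0" using \<open>a \<noteq> b\<close> by auto
    then show "orthogonal (ev a) (ev b)" by (simp add: orthogonal_def)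
  qed
  then have "finite (ev ` S)" by (rule pairwise_orthogonal_imp_finite)
  then show ?thesis using inj finite_imageD S_def by blast
qed

lemma transpose_diff: "transpose (X - Y) = transpose X - transpose (Y::real^'n::finite^'m::finite)"
  by (simp add: transpose_def vec_eq_iff)

lemma C_inj:
  fixes B :: "real^'n::finite^'n" and \<alpha> :: real
  assumes sym: "transpose B = B" and T: "1 \<le> T" and a: "0 < \<alpha>" "\<alpha> < 1 / rho B"
    and v: "(\<Sum>s<T. matpow (mat 1 - \<alpha> *\<^sub>R B) s *v v) = 0"
  shows "v = 0"
proof -
  define W where "W = mat 1 - \<alpha> *\<^sub>R B"
  define P where "P = matpow W"
  have Wsym: "transpose W = W" by (simp add: W_def transpose_diff transpose_scalar sym)
  have Wu: "W *v u = u - \<alpha> *\<^sub>R (B *v u)" for u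
    by (simp add: W_def matrix_vector_mult_diff_rdistrib smv)
  have Cv: "(\<Sum>s<T. P s *v v) = 0" using v by (simp add: P_def W_def)
  have PS: "P (Suc s) *v u = W *v (P s *v u)" for s u by (simp add: P_def matrix_vector_mul_assoc)
  have "v - P T *v v = (\<Sum>s<T. P s *v v - P (Suc s) *v v)"
    by (subst sum_lessThan_telescope') (simp add: P_def)
  also have "\<dots> = (\<Sum>s<T. P s *v v) - W *v (\<Sum>s<T. P s *v v)"
    by (simp add: PS mv_sum_r sum_subtractf)
  also have "\<dots> = 0" using Cv by simp
  finally have PT: "P T *v v = v" by simp
  have P2T: "P (T+T) *v v = v"
    by (simp add: P_def matpow_add flip: matrix_vector_mul_assoc) (simp add: PT[unfolded P_def])
  define w where "w = P 2 *v v - v"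
  have "(\<Sum>j<T. P (2*j) *v w) = (\<Sum>j<T. P (2 * Suc j) *v v - P (2*j) *v v)"
  proof (rule sum.cong)
    fix j
    have "P (2*j) *v (P 2 *v v) = P (2 * Suc j) *v v"
      by (simp add: P_def matrix_vector_mul_assoc flip: matpow_add)
    then show "P (2*j) *v w = P (2 * Suc j) *v v - P (2*j) *v v"
      by (simp add: w_def matrix_vector_mult_diff_distrib)
  qed simp
  also have "\<dots> = P (2*T) *v v - P (2*0) *v v"
    by (rule sum_lessThan_telescope[where f = "\<lambda>j. P (2*j) *v v"])
  also have "\<dots> = 0" using P2T by (simp add: P_def mult_2)
  finally have Qw: "(\<Sum>j<T. P (2*j) *v w) = 0" .
  have sq: "w \<bullet> (P (2*j) *v w) = (P j *v w) \<bullet> (P j *v w)" for j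
  proof -
    have "w \<bullet> (P (2*j) *v w) = w \<bullet> (P j *v (P j *v w))"
      by (simp add: P_def mult_2 matpow_add matrix_vector_mul_assoc)
    also have "\<dots> = (P j *v w) \<bullet> (P j *v w)"
      using matpow_sym[OF Wsym] by (simp add: P_def)
    finally show ?thesis .
  qed
  obtain T' where T': "T = Suc T'" using T by (cases T) auto
  have "0 = w \<bullet> (\<Sum>j<T. P (2*j) *v w)" using Qw by simp
  also have "\<dots> = (\<Sum>j<T. w \<bullet> (P (2*j) *v w))" by (simp add: inner_sum_right)
  also have "\<dots> = w \<bullet> w + (\<Sum>j<T'. w \<bullet> (P (2*Suc j) *v w))"
    by (simp add: T' sum.lessThan_Suc_shift P_def del: sum.lessThan_Suc mult_Suc_right)
  also have "\<dots> \<ge> w \<bullet> w"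
  proof -
    have nn: "0 \<le> w \<bullet> (P (2*Suc j) *v w)" for j by (simp only: sq inner_ge_zero)
    have "0 \<le> (\<Sum>j<T'. w \<bullet> (P (2*Suc j) *v w))" by (rule sum_nonneg) (rule nn)
    then show ?thesis by simp
  qed
  finally have "w \<bullet> w \<le> 0" .
  then have "w = 0" by (metis inner_eq_zero_iff inner_ge_zero order_antisym)
  then have WWv: "W *v (W *v v) = v"
    by (simp add: w_def P_def matrix_vector_mul_assoc numeral_2_eq_2)
  define b where "b = v - W *v v"
  have Wb: "W *v b = - b" by (simp add: b_def WWv matrix_vector_mult_diff_distrib)
  have "b = 0"
  proof (rule ccontr)
    assume "b \<noteq> 0"
    have "b - \<alpha> *\<^sub>R (B *v b) = - b" using Wb Wu by simp
    then have "\<alpha> *\<^sub>R (B *v b) = 2 *\<^sub>R b" by (simp add: algebra_simps scaleR_2)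
    then have "(1/\<alpha>) *\<^sub>R (\<alpha> *\<^sub>R (B *v b)) = (1/\<alpha>) *\<^sub>R (2 *\<^sub>R b)" by simp
    then have "B *v b = (2 / \<alpha>) *\<^sub>R b" using a(1) by simp
    then have "2 / \<alpha> \<in> {\<mu>. \<exists>v. v \<noteq> 0 \<and> B *v v = \<mu> *\<^sub>R v}" using \<open>b \<noteq> 0\<close> by blast
    then have "2 / \<alpha> \<le> rho B" unfolding rho_def using eig_finite[OF sym] by (rule Max_ge[rotated])
    moreover have "rho B > 0" using a by (metis less_trans zero_less_divide_1_iff)
    ultimately have "2 \<le> rho B * \<alpha>" using a(1) by (simp add: divide_le_eq)
    moreover have "\<alpha> * rho B < 1" using a(2) \<open>rho B > 0\<close> by (simp add: less_divide_eq)
    ultimately show False by (simp add: mult.commute)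
  qed
  then have Wv: "W *v v = v" by (simp add: b_def)
  have Ps: "P s *v v = v" for s by (induction s) (simp_all add: PS Wv P_def flip: matrix_vector_mul_assoc)
  then have "(\<Sum>s<T. v) = 0" using Cv by simp
  then have "real T *\<^sub>R v = 0" by (simp only: sum_constant_scaleR card_lessThan)
  then show ?thesis using T by simp
qed

theorem lemma3p15:
  fixes src dst :: "'e::finite \<Rightarrow> 'n::finite"
    and fs :: "'n \<Rightarrow> real \<Rightarrow> real"
    and m L \<alpha> \<beta> :: real and T :: nat
    and A :: "real^'n^'e" and B :: "real^'n^'n"
    and x0 xs :: "real^'n" and ls :: "real^'e"
    and x :: "nat \<Rightarrow> real^'n" and lam :: "nat \<Rightarrow> real^'e"
    and C M N :: "real^'n^'n"
  assumes graph: "simple_graph src dst" "graph_connected src dst"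
    and A_def: "A = incidence src dst"
    and f_diff: "\<And>i t. fs i differentiable at t"
    and f_diff2: "\<And>i t. deriv (fs i) differentiable at t"
    and f_bounds: "\<And>i t. m \<le> deriv (deriv (fs i)) t \<and> deriv (deriv (fs i)) t \<le> L"
    and mL: "0 < m" "m \<le> L"
    and B_sym: "transpose B = B"
    and B_psd: "\<And>v. 0 \<le> v \<bullet> (B *v v)"
    and B_null: "{v. B *v v = 0} = {v. A *v v = 0}"
    and B_sparse: "\<And>i j. i \<noteq> j \<Longrightarrow> B $ i $ j \<noteq> 0 \<Longrightarrow> adjacent src dst i j"
    and xs_opt: "A *v xs = 0" "\<And>y. A *v y = 0 \<Longrightarrow> fobj fs xs \<le> fobj fs y"
    and xs_unique: "\<And>y. A *v y = 0 \<Longrightarrow> fobj fs y \<le> fobj fs xs \<Longrightarrow> y = xs"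
    and kkt: "fgrad fs xs + transpose A *v ls = 0" "B *v xs = 0"
    and ls_col: "ls \<in> range (\<lambda>y. A *v y)"
    and params: "0 < \<beta>" "1 \<le> T" "0 < \<alpha>" "\<alpha> < 1 / rho B"
    and iter: "\<And>k. x k = fst (flexpd fs A B \<alpha> \<beta> T x0 k)"
              "\<And>k. lam k = snd (flexpd fs A B \<alpha> \<beta> T x0 k)"
    and C_def: "C = (\<Sum>t<T. matpow (mat 1 - \<alpha> *\<^sub>R B) t)"
    and M_def: "M = matrix_inv C ** matpow (mat 1 - \<alpha> *\<^sub>R B) T"
    and N_def: "N = (1 / \<alpha>) *\<^sub>R (matrix_inv C - M)"
  shows "\<alpha> *\<^sub>R (fgrad fs (x k) - fgrad fs xs) =
           M *v (x k - x (Suc k))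
         + \<alpha> *\<^sub>R ((\<beta> *\<^sub>R (transpose A ** A) - N) *v (x (Suc k) - xs))
         - \<alpha> *\<^sub>R (transpose A *v (lam (Suc k) - ls))"
proof -
  define W where "W = mat 1 - \<alpha> *\<^sub>R B"
  define P where "P = matpow W T"
  define Ci where "Ci = matrix_inv C"
  define g where "g = fgrad fs (x k)"
  define gs where "gs = fgrad fs xs"
  define xk where "xk = x k"
  define x1 where "x1 = x (Suc k)"
  define lk where "lk = lam k"
  define l1 where "l1 = lam (Suc k)"
  define y where "y = g + transpose A *v lk"
  obtain a b where ab: "flexpd fs A B \<alpha> \<beta> T x0 k = (a, b)" by (cases "flexpd fs A B \<alpha> \<beta> T x0 k")
  have xk: "xk = a" "lk = b" using ab iter by (simp_all add: xk_def lk_def)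
  have x1: "x1 = inner_loop \<alpha> A B g lk T xk" and l1: "l1 = lk + \<beta> *\<^sub>R (A *v x1)"
    using ab iter by (simp_all add: x1_def l1_def xk g_def Let_def flip: xk_def)
  have Cu: "C *v u = (\<Sum>s<T. matpow W s *v u)" for u by (simp add: C_def W_def mv_sum)
  have x1f: "x1 = P *v xk - \<alpha> *\<^sub>R (C *v y)"
    by (simp add: x1 inner_loop_formula P_def W_def Cu y_def)
  have "\<exists>D. D ** C = mat 1"
    unfolding matrix_left_invertible_ker
  proof (intro allI impI)
    fix v assume "C *v v = 0"
    then show "v = 0" using C_inj[OF B_sym params(2) params(3) params(4)] by (simp add: Cu W_def)
  qed
  then have "invertible C" by (simp add: invertible_left_inverse)
  then have CiC: "Ci ** C = mat 1" unfolding Ci_def matrix_inv_def invertible_def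
    by (metis (mono_tags, lifting) someI_ex)
  have CiCu: "Ci *v (C *v u) = u" for u by (simp add: matrix_vector_mul_assoc CiC)
  have Mu: "M *v u = Ci *v (P *v u)" for u by (simp add: M_def Ci_def P_def W_def matrix_vector_mul_assoc)
  have Nu: "\<alpha> *\<^sub>R (N *v u) = Ci *v u - M *v u" for u
    using params(3) by (simp add: N_def smv Ci_def matrix_vector_mult_diff_rdistrib)
  have Ci1: "Ci *v x1 = M *v xk - \<alpha> *\<^sub>R y"
    by (simp add: x1f matrix_vector_mult_diff_distrib matrix_vector_mult_scaleR CiCu Mu)
  have Wxs: "W *v xs = xs" by (simp add: W_def matrix_vector_mult_diff_rdistrib smv kkt(2))
  have Pxs: "matpow W t *v xs = xs" for t
    by (induction t) (simp_all add: Wxs flip: matrix_vector_mul_assoc)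
  have Mxs: "M *v xs = Ci *v xs" by (simp add: Mu P_def Pxs)
  have gs: "gs = - (transpose A *v ls)" using kkt(1) by (simp add: gs_def eq_neg_iff_add_eq_0)
  have AtA: "(\<beta> *\<^sub>R (transpose A ** A) - N) *v u = \<beta> *\<^sub>R (transpose A *v (A *v u)) - N *v u" for u
    by (simp add: matrix_vector_mult_diff_rdistrib smv matrix_vector_mul_assoc)
  have "M *v (xk - x1) + \<alpha> *\<^sub>R ((\<beta> *\<^sub>R (transpose A ** A) - N) *v (x1 - xs))
         - \<alpha> *\<^sub>R (transpose A *v (l1 - ls))
       = M *v xk - M *v x1 - \<alpha> *\<^sub>R (N *v x1) + \<alpha> *\<^sub>R (N *v xs)
         - \<alpha> *\<^sub>R (transpose A *v lk) + \<alpha> *\<^sub>R (transpose A *v ls)"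
    unfolding AtA by (simp add: l1 xs_opt(1) matrix_vector_mult_diff_distrib matrix_vector_right_distrib
       matrix_vector_mult_scaleR algebra_simps)
  also have "\<dots> = M *v xk - Ci *v x1 - \<alpha> *\<^sub>R (transpose A *v lk) + \<alpha> *\<^sub>R (transpose A *v ls)"
    by (simp add: Nu Mxs)
  also have "\<dots> = \<alpha> *\<^sub>R (g - gs)"
    by (simp add: Ci1 y_def gs algebra_simps)
  finally show ?thesis by (simp add: g_def gs_def xk_def x1_def l1_def)
qed

end
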